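(* For $n\ge0$ let $\mathcal{G}_n$ be the set of words $w=w_1\cdots w_{2n}$ over $\{0,1\}$ consisting of $n$ zeros and $n$ ones, and let $\mathrm{da}(w)=|\{i\in[n]: w_i\neq w_{2n+1-i}\}|$. Then $$\sum_{n\ge0}\sum_{w\in\mathcal{G}_n} t^{\mathrm{da}(w)}x^n=\frac{1}{\sqrt{1-4tx+4(t^2-1)x^2}}.$$
   Context: $[n]=\{1,2,\dots,n\}$. *)

theory Defs
  imports Complex_Main
begin

text \<open>Words over {0,1} of length 2n with n zeros and n ones (positions 1..2n
  correspond to list indices 0..2n-1).\<close>
definition G :: "nat \<Rightarrow> nat list set" where
  "G n = {w. length w = 2 * n \<and> set w \<subseteq> {0, 1} \<and> count_list w 0 = n \<and> count_list w 1 = n}"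

definition da :: "nat list \<Rightarrow> nat" where
  "da w = card {i \<in> {1..length w div 2}. w ! (i - 1) \<noteq> w ! (length w - i)}"

end

theory Submission
  imports Defs "HOL-Analysis.Analysis" "HOL-Computational_Algebra.Polynomial"
begin

definition W :: "nat \<Rightarrow> nat list set" where
  "W n = {w. length w = 2 * n \<and> set w \<subseteq> {0, 1}}"

lemma finite_W: "finite (W n)"
proof -
  have "W n \<subseteq> {w. set w \<subseteq> {0,1} \<and> length w = 2 * n}" unfolding W_def by auto
  moreover have "finite {w. set w \<subseteq> {0::nat,1} \<and> length w = 2 * n}"
    by (rule finite_lists_length_eq) simp
  ultimately show ?thesis by (rule finite_subset)
qed

lemma W_0: "W 0 = {[]}" unfolding W_def by auto

lemma W_Suc: "W (Suc n) = (\<lambda>(a,w,b). a # w @ [b]) ` ({0,1} \<times> W n \<times> {0,1})"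
proof
  show "(\<lambda>(a,w,b). a # w @ [b]) ` ({0,1} \<times> W n \<times> {0,1}) \<subseteq> W (Suc n)"
    unfolding W_def by auto
  show "W (Suc n) \<subseteq> (\<lambda>(a,w,b). a # w @ [b]) ` ({0,1} \<times> W n \<times> {0,1})"
  proof
    fix v assume v: "v \<in> W (Suc n)"
    then obtain a v' where av: "v = a # v'" unfolding W_def by (cases v) auto
    with v have "v' \<noteq> []" unfolding W_def by auto
    then have v': "v' = butlast v' @ [last v']" by simp
    have sv: "set v' \<subseteq> {0,1}" using v av unfolding W_def by auto
    have "last v' \<in> {0,1}" using sv last_in_set[OF \<open>v' \<noteq> []\<close>] by blast
    moreover have "a \<in> {0,1}" "butlast v' \<in> W n"
      using v av v' \<open>v' \<noteq> []\<close> last_in_set[OF \<open>v' \<noteq> []\<close>] in_set_butlastD[of _ v'] unfolding W_def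
      by auto
    ultimately show "v \<in> (\<lambda>(a,w,b). a # w @ [b]) ` ({0,1} \<times> W n \<times> {0,1})"
      using av v' by (intro image_eqI[of _ _ "(a, butlast v', last v')"]) auto
  qed
qed

lemma inj_cs: "inj_on (\<lambda>(a::nat,w,b). a # w @ [b]) X"
  by (auto simp: inj_on_def)

lemma da_Nil: "da [] = 0" unfolding da_def by simp

lemma da_cs: "da (a # w @ [b]) = da w + (if a = b then 0 else 1)"
proof -
  define L where "L = length w"
  define S where "S = {i \<in> {1..L div 2}. w ! (i - 1) \<noteq> w ! (L - i)}"
  define v where "v = a # w @ [b]"
  have lv: "length v = L + 2" unfolding v_def L_def by simp
  have S': "{i \<in> {1..length v div 2}. v ! (i - 1) \<noteq> v ! (length v - i)}
      = (if a = b then {} else {1}) \<union> Suc ` S" (is "?A = ?B")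
  proof (intro equalityI subsetI)
    fix i assume i: "i \<in> ?A"
    show "i \<in> ?B"
    proof (cases "i = 1")
      case True
      then show ?thesis using i lv by (auto simp: v_def nth_append L_def)
    next
      case False
      then obtain j where j: "i = Suc j" "j \<ge> 1" using i by (cases i) auto
      have jL: "j \<le> L div 2" using i j lv by auto
      have e1: "v ! (i - 1) = w ! (j - 1)" using j jL by (auto simp: v_def nth_append L_def)
      have e2: "v ! (length v - i) = w ! (L - j)" using j jL lv
        by (auto simp: v_def nth_append L_def Suc_diff_Suc)
      have "j \<in> S" using i e1 e2 jL j unfolding S_def by auto
      then show ?thesis using j by auto
    qed
  next
    fix i assume i: "i \<in> ?B"
    show "i \<in> ?A"
    proof (cases "i = 1")
      case True
      then show ?thesis using i lv by (auto simp: v_def nth_append L_def S_def split: if_splits)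
    next
      case False
      then obtain j where j: "i = Suc j" "j \<in> S" using i by (auto split: if_splits)
      have jL: "j \<le> L div 2" "j \<ge> 1" using j unfolding S_def by auto
      have e1: "v ! (i - 1) = w ! (j - 1)" using j jL by (auto simp: v_def nth_append L_def)
      have e2: "v ! (length v - i) = w ! (L - j)" using j jL lv
        by (auto simp: v_def nth_append L_def Suc_diff_Suc)
      show ?thesis using e1 e2 j jL lv unfolding S_def by auto
    qed
  qed
  have fS: "finite S" unfolding S_def by auto
  have "1 \<notin> Suc ` S" unfolding S_def by auto
  then have "card ((if a = b then {} else {1}) \<union> Suc ` S) = card S + (if a = b then 0 else 1)"
    using fS by (auto simp: card_image)
  then show ?thesis using S' unfolding da_def v_def S_def L_def by simp
qed


definition Q :: "real \<Rightarrow> nat \<Rightarrow> real poly" where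
  "Q t n = (\<Sum>w\<in>W n. monom (t ^ da w) (count_list w 0))"

lemma Q_Suc: "Q t (Suc n) = (monom 1 2 + monom (2*t) 1 + 1) * Q t n"
proof -
  let ?f = "\<lambda>w. monom (t ^ da w) (count_list w 0)"
  let ?g = "\<lambda>(a::nat) (b::nat). monom (t ^ (if a = b then 0 else 1))
              ((if a = 0 then 1 else 0) + (if b = 0 then 1 else 0))"
  have m2: "monom (2*t) 1 = monom t 1 + monom t 1"
    by (metis add_monom mult_2)
  have "Q t (Suc n) = (\<Sum>x\<in>{0,1} \<times> W n \<times> {0,1}. ?f ((\<lambda>(a,w,b). a # w @ [b]) x))"
    unfolding Q_def W_Suc by (rule sum.reindex[OF inj_cs, unfolded comp_def])
  also have "\<dots> = (\<Sum>x\<in>{0,1} \<times> W n \<times> {0,1}. (case x of (a,w,b) \<Rightarrow> ?g a b * ?f w))"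
    by (intro sum.cong refl) (auto simp: da_cs mult_monom power_add algebra_simps)
  also have "\<dots> = (\<Sum>a\<in>{0,1}. \<Sum>w\<in>W n. \<Sum>b\<in>{0,1}. ?g a b * ?f w)"
    by (simp only: sum.cartesian_product)
  also have "\<dots> = (\<Sum>w\<in>W n. (?g 0 0 + ?g 0 1 + ?g 1 0 + ?g 1 1) * ?f w)"
    by (simp add: sum.distrib distrib_right sum_distrib_left mult.assoc)
  also have "?g 0 0 + ?g 0 1 + ?g 1 0 + ?g 1 1 = monom 1 2 + monom (2*t) 1 + 1"
    unfolding m2 by (simp add: numeral_2_eq_2)
  finally show ?thesis by (simp add: sum_distrib_left Q_def)
qed

lemma Q_eq: "Q t n = (monom 1 2 + monom (2*t) 1 + 1) ^ n"
proof (induction n)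
  case 0
  then show ?case by (simp add: Q_def W_0 da_Nil)
next
  case (Suc n)
  then show ?case by (simp add: Q_Suc)
qed

lemma count01: "set (w::nat list) \<subseteq> {0,1} \<Longrightarrow> count_list w 0 + count_list w 1 = length w"
  by (induction w) auto

lemma coeff_Q: "coeff (Q t n) n = (\<Sum>w\<in>G n. t ^ da w)"
proof -
  have "coeff (Q t n) n = (\<Sum>w\<in>W n. if count_list w 0 = n then t ^ da w else 0)"
    unfolding Q_def coeff_sum by (intro sum.cong refl) auto
  also have "\<dots> = (\<Sum>w\<in>{w\<in>W n. count_list w 0 = n}. t ^ da w)"
    by (simp add: sum.inter_filter finite_W)
  also have "{w\<in>W n. count_list w 0 = n} = G n"
  proof (intro equalityI subsetI)
    fix w assume "w \<in> {w\<in>W n. count_list w 0 = n}"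
    then show "w \<in> G n" using count01[of w] unfolding W_def G_def by auto
  next
    fix w assume "w \<in> G n"
    then show "w \<in> {w\<in>W n. count_list w 0 = n}" unfolding W_def G_def by auto
  qed
  finally show ?thesis .
qed

lemma coeff_B: "coeff ((monom (1::real) 2 + 1) ^ k) k = (if even k then real (k choose (k div 2)) else 0)"
proof -
  have "(monom (1::real) 2 + 1) ^ k = (\<Sum>i\<le>k. of_nat (k choose i) * monom 1 (2*i))"
    by (simp add: binomial_ring monom_power mult.commute)
  also have "\<dots> = (\<Sum>i\<le>k. monom (real (k choose i)) (2*i))"
    by (simp add: of_nat_poly smult_monom)
  finally have "coeff ((monom (1::real) 2 + 1) ^ k) k = (\<Sum>i\<le>k. if 2 * i = k then real (k choose i) else 0)"
    by (simp add: coeff_sum)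
  also have "\<dots> = (\<Sum>i\<le>k. if i = k div 2 \<and> even k then real (k choose i) else 0)"
    by (intro sum.cong refl) auto
  also have "\<dots> = (if even k then real (k choose (k div 2)) else 0)"
    by (auto simp: sum.delta')
  finally show ?thesis .
qed

lemma coeff_mult_monom': "m \<le> n \<Longrightarrow> coeff (p * monom c m) n = c * coeff p (n - m)"
  by (simp add: mult.commute[of p] coeff_monom_mult)

lemma comb_formula: "(\<Sum>w\<in>G n. t ^ da w) =
   (\<Sum>a | 2 * a \<le> n. real (n choose (2*a)) * real ((2*a) choose a) * (2*t) ^ (n - 2*a))"
proof -
  have "(\<Sum>w\<in>G n. t ^ da w) = coeff ((monom 1 2 + 1 + monom (2*t) 1) ^ n) n"
    by (simp add: coeff_Q[symmetric] Q_eq add_ac)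
  also have "(monom 1 2 + 1 + monom (2*t) 1) ^ n =
     (\<Sum>k\<le>n. of_nat (n choose k) * (monom 1 2 + 1) ^ k * monom ((2*t)^(n-k)) (n-k))"
    by (simp add: binomial_ring monom_power)
  also have "coeff \<dots> n = (\<Sum>k\<le>n. real (n choose k) * coeff ((monom 1 2 + 1) ^ k) k * (2*t)^(n-k))"
    unfolding coeff_sum
  proof (intro sum.cong refl)
    fix k assume "k \<in> {..n}"
    then show "coeff (of_nat (n choose k) * (monom 1 2 + 1) ^ k * monom ((2*t)^(n-k)) (n-k)) n
       = real (n choose k) * coeff ((monom 1 2 + 1) ^ k) k * (2*t)^(n-k)"
      by (simp add: coeff_mult_monom' of_nat_poly)
  qed
  also have "\<dots> = (\<Sum>k\<le>n. if even k then real (n choose k) * real (k choose (k div 2)) * (2*t)^(n-k) else 0)"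
    by (intro sum.cong refl) (simp add: coeff_B)
  also have "\<dots> = (\<Sum>k\<in>{k\<in>{..n}. even k}. real (n choose k) * real (k choose (k div 2)) * (2*t)^(n-k))"
    by (rule sum.inter_filter[symmetric]) simp
  also have "{k\<in>{..n}. even k} = (\<lambda>a. 2*a) ` {a. 2*a \<le> n}"
    by (auto elim!: evenE)
  also have "(\<Sum>k\<in>(\<lambda>a. 2*a) ` {a. 2*a \<le> n}. real (n choose k) * real (k choose (k div 2)) * (2*t)^(n-k))
     = (\<Sum>a | 2 * a \<le> n. real (n choose (2*a)) * real ((2*a) choose a) * (2*t) ^ (n - 2*a))"
    by (subst sum.reindex) (auto simp: inj_on_def)
  finally show ?thesis .
qed


lemma central_aux: "(-4::real)^n * (\<Prod>i=0..<n. (-1/2 - real i)) * fact n = fact (2*n)"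
proof (induction n)
  case 0
  then show ?case by simp
next
  case (Suc n)
  have "(-4::real)^Suc n * (\<Prod>i=0..<Suc n. (-1/2 - real i)) * fact (Suc n)
     = ((-4)^n * (\<Prod>i=0..<n. (-1/2 - real i)) * fact n) * ((-4) * (-1/2 - real n) * (n+1))"
    by (simp add: algebra_simps)
  also have "\<dots> = fact (2*n) * ((2*n+1) * (2*n+2))" using Suc by (simp add: algebra_simps)
  also have "\<dots> = fact (2 * Suc n)"
    by (simp add: algebra_simps)
  finally show ?case .
qed

lemma central_gchoose: "((-1/2::real) gchoose n) * (-4)^n = real ((2*n) choose n)"
proof -
  have h: "((-1/2::real) gchoose n) * fact n = (\<Prod>i=0..<n. (-1/2 - real i))"
    by (simp add: gbinomial_mult_fact')
  have "((-1/2::real) gchoose n) * (-4)^n * (fact n * fact n) = (-4)^n * (((-1/2::real) gchoose n) * fact n) * fact n"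
    by (simp add: algebra_simps)
  also have "\<dots> = fact (2*n)" unfolding h by (rule central_aux)
  finally have "((-1/2::real) gchoose n) * (-4)^n * (fact n * fact n) = fact (2*n)" .
  moreover have "real ((2*n) choose n) * (fact n * fact n) = fact (2*n)"
  proof -
    have "fact n * fact (2*n - n) * ((2*n) choose n) = (fact (2*n) :: nat)"
      by (rule binomial_fact_lemma) simp
    then have "real (fact n * fact n * ((2*n) choose n)) = real (fact (2*n))" by simp
    then show ?thesis by (simp only: of_nat_mult of_nat_fact mult_ac)
  qed
  ultimately show ?thesis by (metis fact_nonzero mult_cancel_right no_zero_divisors)
qed

lemma central_series:
  assumes "\<bar>u\<bar> < 1/4"
  shows "(\<lambda>n. real ((2*n) choose n) * u^n) sums (1 / sqrt (1 - 4*u))"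
proof -
  have "\<bar>-4*u\<bar> < 1" using assms by simp
  from gen_binomial_real[OF this, of "-1/2"]
  have "(\<lambda>n. ((-1/2) gchoose n) * (-4*u)^n) sums (1 + -4*u) powr (-1/2)" .
  moreover have "((-1/2) gchoose n) * (-4*u)^n = real ((2*n) choose n) * u^n" for n
  proof -
    have "(-4*u)^n = (-4)^n * u^n" by (rule power_mult_distrib)
    then have "((-1/2) gchoose n) * (-4*u)^n = (((-1/2::real) gchoose n) * (-4)^n) * u^n"
      by (simp only: mult.assoc)
    then show ?thesis by (simp only: central_gchoose)
  qed
  moreover have "(1 + -4*u) powr (-1/2) = 1 / sqrt (1 - 4*u)"
    using assms by (simp add: powr_minus_divide powr_half_sqrt)
  ultimately show ?thesis by simp
qed

lemma neg_binomial_series: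
  fixes y :: real
  assumes "\<bar>y\<bar> < 1"
  shows "(\<lambda>d. real ((m+d) choose d) * y^d) sums (1 / (1-y)^(m+1))"
proof -
  have "\<bar>-y\<bar> < 1" using assms by simp
  from gen_binomial_real[OF this, of "-(real m + 1)"]
  have "(\<lambda>n. ((-(real m + 1)) gchoose n) * (-y)^n) sums (1 + -y) powr (-(real m + 1))" .
  moreover have "((-(real m + 1)) gchoose n) * (-y)^n = real ((m+n) choose n) * y^n" for n
  proof -
    have "((-(real m + 1)) gchoose n) = (-1)^n * ((real m + 1 + real n - 1) gchoose n)"
      by (rule gbinomial_minus)
    also have "real m + 1 + real n - 1 = real (m+n)" by simp
    also have "(real (m+n) gchoose n) = real ((m+n) choose n)" by (simp add: binomial_gbinomial)
    finally show ?thesis by (simp add: power_minus')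
  qed
  moreover have "(1 + -y) powr (-(real m + 1)) = 1 / (1-y)^(m+1)"
  proof -
    have pos: "0 < 1 - y" using assms by simp
    have "(1-y) powr (real (m+1)) = (1-y)^(m+1)" by (rule powr_realpow[OF pos])
    moreover have "(1 + -y) powr (-(real m + 1)) = inverse ((1-y) powr (real (m+1)))"
      using powr_minus[of "1-y" "real (m+1)"] by (simp add: add.commute)
    ultimately show ?thesis by (simp add: divide_inverse)
  qed
  ultimately show ?thesis by simp
qed


lemma main_sum:
  fixes t x :: real
  assumes xr: "\<bar>x\<bar> < 1 / (2 * (1 + \<bar>t\<bar>))"
  shows "(\<lambda>n. (\<Sum>a | 2*a \<le> n. real (n choose (2*a)) * real ((2*a) choose a) * (2*t)^(n-2*a)) * x^n)
           sums (1 / sqrt (1 - 4 * t * x + 4 * (t\<^sup>2 - 1) * x\<^sup>2))"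
proof -
  define y where "y = 2 * t * x"
  define X where "X = \<bar>x\<bar>"
  define Y where "Y = \<bar>y\<bar>"
  have X0: "X \<ge> 0" and Y0: "Y \<ge> 0" unfolding X_def Y_def by auto
  have "\<bar>x\<bar> * (2 * (1 + \<bar>t\<bar>)) < 1"
    using xr by (simp add: pos_less_divide_eq add_pos_nonneg)
  then have XY: "2 * X + Y < 1" unfolding X_def Y_def y_def by (simp add: abs_mult algebra_simps)
  have Y1: "Y < 1" using XY X0 by simp
  have y1: "\<bar>y\<bar> < 1" using Y1 Y_def by simp
  have ypos: "1 - y > 0" "1 - Y > 0" using y1 Y1 by auto
  have yY: "1 - Y \<le> 1 - y" unfolding Y_def by simp
  define u where "u = x^2 / (1-y)^2"
  define U where "U = X^2 / (1-Y)^2"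
  have u0: "u \<ge> 0" and U0: "U \<ge> 0" unfolding u_def U_def by auto
  have "(2*X)^2 < (1-Y)^2" using XY X0 by (intro power_strict_mono) auto
  moreover have "4*U = (2*X)^2/(1-Y)^2" unfolding U_def by (simp add: power2_eq_square)
  moreover have "0 < (1-Y)^2" using ypos by simp
  ultimately have U4: "4 * U < 1" by (simp add: divide_less_eq)
  have "(1-Y)^2 \<le> (1-y)^2" using yY ypos by (intro power_mono) auto
  then have "x^2/(1-y)^2 \<le> x^2/(1-Y)^2"
    by (rule divide_left_mono) (use ypos in auto)
  then have "4 * u \<le> 4 * U" unfolding u_def U_def X_def by simp
  then have u4: "4 * u < 1" using U4 by simp
  define C where "C = (\<lambda>a. real ((2*a) choose a))"
  define c where "c = (\<lambda>(a,d). C a * x^(2*a) * (real ((2*a+d) choose d) * y^d))"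
  define c' where "c' = (\<lambda>(a,d). C a * X^(2*a) * (real ((2*a+d) choose d) * Y^d))"
  define g where "g = (\<lambda>a. C a * x^(2*a) * (1 / (1-y)^(2*a+1)))"
  define g' where "g' = (\<lambda>a. C a * X^(2*a) * (1 / (1-Y)^(2*a+1)))"
  have C0: "C a \<ge> 0" for a unfolding C_def by simp
  have innerY: "(\<lambda>d. c' (a,d)) sums g' a" for a
    unfolding c'_def g'_def using sums_mult[OF neg_binomial_series[of Y "2*a"], of "C a * X^(2*a)"] Y0 Y1
    by simp
  have innery: "(\<lambda>d. c (a,d)) sums g a" for a
    unfolding c_def g_def using sums_mult[OF neg_binomial_series[of y "2*a"], of "C a * x^(2*a)"] y1
    by simp
  have normc: "norm (c z) = c' z" for z
    unfolding c_def c'_def X_def Y_def using C0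
    by (cases z) (simp add: abs_mult power_abs)
  have g'eq: "g' a = (1/(1-Y)) * (C a * U^a)" for a
  proof -
    have "g' a = C a * (X^2)^a / (((1-Y)^2)^a * (1-Y))" unfolding g'_def by (simp add: power_mult power_add)
    also have "\<dots> = (1/(1-Y)) * (C a * U^a)" unfolding U_def using ypos by (simp add: power_divide)
    finally show ?thesis .
  qed
  have geq: "g a = (1/(1-y)) * (C a * u^a)" for a
  proof -
    have "g a = C a * (x^2)^a / (((1-y)^2)^a * (1-y))" unfolding g_def by (simp add: power_mult power_add)
    also have "\<dots> = (1/(1-y)) * (C a * u^a)" unfolding u_def using ypos by (simp add: power_divide)
    finally show ?thesis .
  qed
  have outerY: "g' sums ((1/(1-Y)) * (1 / sqrt (1 - 4*U)))"
    unfolding g'eq C_def by (intro sums_mult central_series) (use U0 U4 in simp)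
  have outery: "g sums ((1/(1-y)) * (1 / sqrt (1 - 4*u)))"
    unfolding geq C_def by (intro sums_mult central_series) (use u0 u4 in simp)
  have c'0: "c' z \<ge> 0" for z unfolding c'_def using C0 X0 Y0 by (cases z) auto
  have "c' summable_on Sigma UNIV (\<lambda>_. UNIV)"
  proof (rule summable_on_SigmaI[where g = g'])
    show "((\<lambda>d. c' (a, d)) has_sum g' a) UNIV" for a
      by (rule sums_nonneg_imp_has_sum[OF innerY]) (use c'0 in auto)
    have "g' a \<ge> 0" for a unfolding g'eq using C0 U0 ypos by simp
    then show "g' summable_on UNIV"
      using summable_nonneg_imp_summable_on[OF sums_summable[OF outerY]] by blast
  qed (use c'0 in auto)
  then have "c' summable_on UNIV" by simp
  then have "(\<lambda>z. norm (c z)) summable_on UNIV"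
    using abs_summable_on_comparison_test'[of c' UNIV c] normc by simp
  then have csum: "c summable_on UNIV" by (rule abs_summable_summable)
  define F where "F = (1/(1-y)) * (1 / sqrt (1 - 4*u))"
  have "(c has_sum F) (Sigma UNIV (\<lambda>_. UNIV))"
  proof (rule has_sum_SigmaI[where g = g])
    show "((\<lambda>d. c (a, d)) has_sum g a) UNIV" for a
      by (rule norm_summable_imp_has_sum[OF _ innery]) (use normc sums_summable[OF innerY] in simp)
    have "g a \<ge> 0" for a unfolding geq using C0 u0 ypos by simp
    then show "(g has_sum F) UNIV" unfolding F_def
      by (intro norm_summable_imp_has_sum[OF _ outery]) (simp add: sums_summable[OF outery])
    show "c summable_on Sigma UNIV (\<lambda>_. UNIV)" using csum by simp
  qed
  then have cF: "(c has_sum F) UNIV" by simp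
  define B where "B = (\<lambda>n::nat. {a. 2*a \<le> n})"
  have finB: "finite (B n)" for n
    unfolding B_def by (rule finite_subset[of _ "{..n}"]) auto
  have "((\<lambda>(n,a). c (a, n - 2*a)) has_sum F) (Sigma UNIV B) = (c has_sum F) UNIV"
    by (rule has_sum_reindex_bij_witness[where j = "\<lambda>(n,a). (a, n - 2*a)" and i = "\<lambda>(a,d). (2*a+d, a)"])
       (auto simp: B_def)
  with cF have "((\<lambda>(n,a). c (a, n - 2*a)) has_sum F) (Sigma UNIV B)" by simp
  then have "((\<lambda>n. \<Sum>a\<in>B n. c (a, n - 2*a)) has_sum F) UNIV"
    by (rule has_sum_Sigma') (simp add: finB)
  then have S1: "(\<lambda>n. \<Sum>a\<in>B n. c (a, n - 2*a)) sums F" by (rule has_sum_imp_sums)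
  have S2: "(\<Sum>a\<in>B n. c (a, n - 2*a)) =
     (\<Sum>a | 2*a \<le> n. real (n choose (2*a)) * real ((2*a) choose a) * (2*t)^(n-2*a)) * x^n" for n
    unfolding sum_distrib_right B_def
  proof (intro sum.cong refl)
    fix a assume "a \<in> {a. 2*a \<le> n}"
    then have a: "2*a \<le> n" by simp
    then have e: "2*a + (n - 2*a) = n" by simp
    have xn: "x^n = x^(2*a) * x^(n-2*a)" using e by (metis power_add)
    have "n choose (n - 2*a) = n choose (2*a)" using a by (simp add: binomial_symmetric[symmetric])
    then show "c (a, n - 2*a) = real (n choose (2*a)) * real ((2*a) choose a) * (2*t)^(n-2*a) * x^n"
      unfolding c_def C_def y_def xn using e by (simp add: power_mult_distrib algebra_simps)
  qed
  have "F = 1 / sqrt (1 - 4 * t * x + 4 * (t\<^sup>2 - 1) * x\<^sup>2)"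
  proof -
    have "1 - 4*u = ((1-y)^2 - 4*x^2) / (1-y)^2" unfolding u_def using ypos by (simp add: field_simps)
    then have "sqrt (1 - 4*u) = sqrt ((1-y)^2 - 4*x^2) / (1-y)"
      using ypos by (simp add: real_sqrt_divide)
    moreover have "(1-y)^2 - 4*x^2 = 1 - 4 * t * x + 4 * (t\<^sup>2 - 1) * x\<^sup>2"
      unfolding y_def by (simp add: power2_eq_square algebra_simps)
    ultimately show ?thesis unfolding F_def using ypos by simp
  qed
  with S1 S2 show ?thesis by simp
qed

theorem theorem3p1:
  fixes t :: real
  shows "\<exists>r>0. \<forall>x::real. \<bar>x\<bar> < r \<longrightarrow>
    (\<lambda>n. (\<Sum>w\<in>G n. t ^ da w) * x ^ n)
      sums (1 / sqrt (1 - 4 * t * x + 4 * (t\<^sup>2 - 1) * x\<^sup>2))"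
proof (intro exI[of _ "1 / (2 * (1 + \<bar>t\<bar>))"] conjI allI impI)
  show "0 < 1 / (2 * (1 + \<bar>t\<bar>))" by (simp add: add_pos_nonneg)
  fix x :: real assume "\<bar>x\<bar> < 1 / (2 * (1 + \<bar>t\<bar>))"
  then show "(\<lambda>n. (\<Sum>w\<in>G n. t ^ da w) * x ^ n)
      sums (1 / sqrt (1 - 4 * t * x + 4 * (t\<^sup>2 - 1) * x\<^sup>2))"
    unfolding comb_formula by (rule main_sum)
qed

end
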